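(* Let $(X,\beta,\kappa)$ be an analytically locally compact space (AnLCS). Then $FO(\mathbf{\Sigma}^0_1(X))\leq_m FO(\mathbb{N}_2)$.
   Context: For a topological space $X$, $\mathbf{\Sigma}^0_1(X)$ denotes the lattice of all open subsets of $X$ (ordered by inclusion), and $FO(\mathbb{A})$ denotes the set of first-order sentences (in the signature of $\mathbb{A}$) true in a structure $\mathbb{A}$; for lattices of sets the signature may be taken to be $\{\subseteq\}$. $\leq_m$ is many-one reducibility of sets of sentences (coded by natural numbers). $\mathbb{N}_2=(\omega\cup P(\omega);\omega,P(\omega),\in,+,\times)$ is the structure of second-order arithmetic, so $FO(\mathbb{N}_2)$ is (equivalent to) the full second-order theory of arithmetic. Let $\{D_n\}$ be the canonical numbering of finite subsets of $\omega$. An analytically locally compact space (AnLCS) is a triple $(X,\beta,\kappa)$ where $X$ is a topological space, $\beta:\omega\to P(X)$ is a numbering of a base of $X$ that contains the empty set, and $\kappa:\omega\to P(X)$ is a numbering of some compact subsets of $X$, such that each $\beta_n$ is a union of some sets from $\{\kappa_i\mid i<\omega\}$, and the relation $\{(i,n)\mid \kappa_i\subseteq\bigcup_{a\in D_n}\beta_a\}$ is analytical (i.e. belongs to $\bigcup_n\Sigma^1_n$ of the analytical hierarchy of subsets of $\omega$). *)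

theory Defs
  imports "HOL-Analysis.Abstract_Topology" "HOL-Library.Nat_Bijection"
begin

datatype recf = Zero | Succ | Proj nat | Comp recf "recf list" | Prim recf recf | Mu recf

inductive eval_recf :: "recf \<Rightarrow> nat list \<Rightarrow> nat \<Rightarrow> bool" where
  zero: "eval_recf Zero xs 0"
| succ: "eval_recf Succ (x # xs) (Suc x)"
| proj: "i < length xs \<Longrightarrow> eval_recf (Proj i) xs (xs ! i)"
| comp: "list_all2 (\<lambda>g y. eval_recf g xs y) gs ys \<Longrightarrow> eval_recf f ys z
          \<Longrightarrow> eval_recf (Comp f gs) xs z"
| prim0: "eval_recf f xs y \<Longrightarrow> eval_recf (Prim f g) (0 # xs) y"
| primS: "eval_recf (Prim f g) (n # xs) y \<Longrightarrow> eval_recf g (y # n # xs) z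
          \<Longrightarrow> eval_recf (Prim f g) (Suc n # xs) z"
| mu: "eval_recf f (n # xs) 0 \<Longrightarrow> (\<forall>m<n. \<exists>y. y > 0 \<and> eval_recf f (m # xs) y)
          \<Longrightarrow> eval_recf (Mu f) xs n"

definition computable :: "(nat \<Rightarrow> nat) \<Rightarrow> bool" where
  "computable f \<longleftrightarrow> (\<exists>p. \<forall>n. eval_recf p [n] (f n))"

definition many_one_reducible :: "nat set \<Rightarrow> nat set \<Rightarrow> bool" (infix "\<le>\<^sub>m" 50) where
  "A \<le>\<^sub>m B \<longleftrightarrow> (\<exists>f. computable f \<and> (\<forall>n. n \<in> A \<longleftrightarrow> f n \<in> B))"

datatype fm = Eq nat nat | Rel nat "nat list" | Neg fm | Conj fm fm | Ex nat fm

fun wf_fm :: "(nat \<Rightarrow> nat option) \<Rightarrow> fm \<Rightarrow> bool" where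
  "wf_fm sig (Eq i j) = True"
| "wf_fm sig (Rel r xs) = (sig r = Some (length xs))"
| "wf_fm sig (Neg p) = wf_fm sig p"
| "wf_fm sig (Conj p q) = (wf_fm sig p \<and> wf_fm sig q)"
| "wf_fm sig (Ex x p) = wf_fm sig p"

fun fv :: "fm \<Rightarrow> nat set" where
  "fv (Eq i j) = {i, j}"
| "fv (Rel r xs) = set xs"
| "fv (Neg p) = fv p"
| "fv (Conj p q) = fv p \<union> fv q"
| "fv (Ex x p) = fv p - {x}"

definition sentence :: "(nat \<Rightarrow> nat option) \<Rightarrow> fm \<Rightarrow> bool" where
  "sentence sig p \<longleftrightarrow> wf_fm sig p \<and> fv p = {}"

fun sat :: "'a set \<Rightarrow> (nat \<Rightarrow> 'a list \<Rightarrow> bool) \<Rightarrow> (nat \<Rightarrow> 'a) \<Rightarrow> fm \<Rightarrow> bool" where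
  "sat D I e (Eq i j) = (e i = e j)"
| "sat D I e (Rel r xs) = I r (map e xs)"
| "sat D I e (Neg p) = (\<not> sat D I e p)"
| "sat D I e (Conj p q) = (sat D I e p \<and> sat D I e q)"
| "sat D I e (Ex x p) = (\<exists>a\<in>D. sat D I (e(x := a)) p)"

fun code :: "fm \<Rightarrow> nat" where
  "code (Eq i j) = prod_encode (0, prod_encode (i, j))"
| "code (Rel r xs) = prod_encode (1, prod_encode (r, list_encode xs))"
| "code (Neg p) = prod_encode (2, code p)"
| "code (Conj p q) = prod_encode (3, prod_encode (code p, code q))"
| "code (Ex x p) = prod_encode (4, prod_encode (x, code p))"

definition FO_theory :: "(nat \<Rightarrow> nat option) \<Rightarrow> 'a set \<Rightarrow> (nat \<Rightarrow> 'a list \<Rightarrow> bool) \<Rightarrow> nat set" where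
  "FO_theory sig D I =
     {code p | p. sentence sig p \<and> (\<forall>e. range e \<subseteq> D \<longrightarrow> sat D I e p)}"

definition lat_sig :: "nat \<Rightarrow> nat option" where
  "lat_sig r = (if r = 0 then Some 2 else None)"

definition lat_rel :: "nat \<Rightarrow> 'a set list \<Rightarrow> bool" where
  "lat_rel r xs = (r = 0 \<and> (\<exists>U V. xs = [U, V] \<and> U \<subseteq> V))"

definition FO_open_lattice :: "'a topology \<Rightarrow> nat set" where
  "FO_open_lattice X = FO_theory lat_sig {U. openin X U} lat_rel"

text \<open>Domain: the disjoint union nat + nat set; + and \<times> as ternary graph relations.\<close>
definition n2_sig :: "nat \<Rightarrow> nat option" where
  "n2_sig r = (if r = 0 then Some 1 else if r = 1 then Some 1 else if r = 2 then Some 2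
              else if r = 3 then Some 3 else if r = 4 then Some 3 else None)"

definition n2_rel :: "nat \<Rightarrow> (nat + nat set) list \<Rightarrow> bool" where
  "n2_rel r xs =
     (if r = 0 then (\<exists>n. xs = [Inl n])
      else if r = 1 then (\<exists>A. xs = [Inr A])
      else if r = 2 then (\<exists>n A. xs = [Inl n, Inr A] \<and> n \<in> A)
      else if r = 3 then (\<exists>a b. xs = [Inl a, Inl b, Inl (a + b)])
      else if r = 4 then (\<exists>a b. xs = [Inl a, Inl b, Inl (a * b)])
      else False)"

definition FO_N2 :: "nat set" where
  "FO_N2 = FO_theory n2_sig UNIV n2_rel"

text \<open>Analytical sets: subsets of \<omega> definable in N_2 (= union of all \<Sigma>^1_n).\<close>
definition analytical :: "nat set \<Rightarrow> bool" where
  "analytical A \<longleftrightarrow> (\<exists>p. wf_fm n2_sig p \<and> fv p \<subseteq> {0} \<and>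
      (\<forall>n. n \<in> A \<longleftrightarrow> sat UNIV n2_rel (\<lambda>_. Inl n) p))"

text \<open>D_n = set_decode n is the canonical numbering of finite sets; pairs coded by prod_encode.\<close>
definition AnLCS :: "'a topology \<Rightarrow> (nat \<Rightarrow> 'a set) \<Rightarrow> (nat \<Rightarrow> 'a set) \<Rightarrow> bool" where
  "AnLCS X \<beta> \<kappa> \<longleftrightarrow>
     (\<forall>n. openin X (\<beta> n)) \<and> (\<forall>U. openin X U \<longrightarrow> (\<exists>I. U = \<Union> (\<beta> ` I))) \<and>
     (\<exists>n. \<beta> n = {}) \<and>
     (\<forall>i. compactin X (\<kappa> i)) \<and>
     (\<forall>n. \<exists>I. \<beta> n = \<Union> (\<kappa> ` I)) \<and>
     analytical {prod_encode (i, n) | i n. \<kappa> i \<subseteq> \<Union> (\<beta> ` set_decode n)}"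

end

theory Submission
  imports Defs
begin


definition ck :: "nat \<Rightarrow> (nat list \<Rightarrow> nat) \<Rightarrow> bool" where
  "ck k f \<longleftrightarrow> (\<exists>p. \<forall>xs. length xs = k \<longrightarrow> eval_recf p xs (f xs))"

lemma ck_zero: "ck k (\<lambda>_. 0)"
  unfolding ck_def by (rule exI[of _ Zero]) (auto intro: eval_recf.zero)

lemma ck_succ: "ck k f \<Longrightarrow> ck k (\<lambda>xs. Suc (f xs))"
  unfolding ck_def
proof (elim exE)
  fix p assume p: "\<forall>xs. length xs = k \<longrightarrow> eval_recf p xs (f xs)"
  show "\<exists>p. \<forall>xs. length xs = k \<longrightarrow> eval_recf p xs (Suc (f xs))"
    apply (rule exI[of _ "Comp Succ [p]"])
    using p by (auto intro!: eval_recf.comp eval_recf.succ)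
qed

lemma ck_const: "ck k (\<lambda>_. c)"
proof (induction c)
  case 0 then show ?case by (rule ck_zero)
next
  case (Suc c) then show ?case using ck_succ[of k "\<lambda>_. c"] by simp
qed

lemma ck_proj: "i < k \<Longrightarrow> ck k (\<lambda>xs. xs ! i)"
  unfolding ck_def by (rule exI[of _ "Proj i"]) (auto intro: eval_recf.proj)

lemma ck_comp1: "ck 1 g \<Longrightarrow> ck k f \<Longrightarrow> ck k (\<lambda>xs. g [f xs])"
  unfolding ck_def
proof (elim exE)
  fix p q assume p: "\<forall>xs. length xs = 1 \<longrightarrow> eval_recf p xs (g xs)"
    and q: "\<forall>xs. length xs = k \<longrightarrow> eval_recf q xs (f xs)"
  show "\<exists>p. \<forall>xs. length xs = k \<longrightarrow> eval_recf p xs (g [f xs])"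
    apply (rule exI[of _ "Comp p [q]"])
    using p q by (auto intro!: eval_recf.comp)
qed

lemma ck_comp2: "ck 2 g \<Longrightarrow> ck k f1 \<Longrightarrow> ck k f2 \<Longrightarrow> ck k (\<lambda>xs. g [f1 xs, f2 xs])"
  unfolding ck_def
proof (elim exE)
  fix p q1 q2 assume p: "\<forall>xs. length xs = 2 \<longrightarrow> eval_recf p xs (g xs)"
    and q1: "\<forall>xs. length xs = k \<longrightarrow> eval_recf q1 xs (f1 xs)"
    and q2: "\<forall>xs. length xs = k \<longrightarrow> eval_recf q2 xs (f2 xs)"
  show "\<exists>p. \<forall>xs. length xs = k \<longrightarrow> eval_recf p xs (g [f1 xs, f2 xs])"
    apply (rule exI[of _ "Comp p [q1, q2]"])
    using p q1 q2 by (auto intro!: eval_recf.comp)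
qed

fun PR :: "(nat list \<Rightarrow> nat) \<Rightarrow> (nat list \<Rightarrow> nat) \<Rightarrow> nat \<Rightarrow> nat list \<Rightarrow> nat" where
  "PR f g 0 xs = f xs"
| "PR f g (Suc n) xs = g (PR f g n xs # n # xs)"

lemma ck_prim: "ck k f \<Longrightarrow> ck (Suc (Suc k)) g \<Longrightarrow> ck (Suc k) (\<lambda>xs. PR f g (hd xs) (tl xs))"
  unfolding ck_def
proof (elim exE)
  fix p q assume p: "\<forall>xs. length xs = k \<longrightarrow> eval_recf p xs (f xs)"
    and q: "\<forall>xs. length xs = Suc (Suc k) \<longrightarrow> eval_recf q xs (g xs)"
  have "length ys = k \<Longrightarrow> eval_recf (Prim p q) (n # ys) (PR f g n ys)" for n ys
  proof (induction n)
    case 0 then show ?case using p by (auto intro: eval_recf.prim0)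
  next
    case (Suc n)
    have "eval_recf q (PR f g n ys # n # ys) (g (PR f g n ys # n # ys))" using q Suc.prems by simp
    then show ?case using Suc by (auto intro: eval_recf.primS)
  qed
  then show "\<exists>r. \<forall>xs. length xs = Suc k \<longrightarrow> eval_recf r xs (PR f g (hd xs) (tl xs))"
    by (intro exI[of _ "Prim p q"]) (auto simp: length_Suc_conv)
qed

lemma ck_mu: "ck (Suc k) f \<Longrightarrow> (\<And>xs. length xs = k \<Longrightarrow> \<exists>n. f (n # xs) = 0)
   \<Longrightarrow> ck k (\<lambda>xs. LEAST n. f (n # xs) = 0)"
  unfolding ck_def
proof (elim exE)
  fix p assume p: "\<forall>xs. length xs = Suc k \<longrightarrow> eval_recf p xs (f xs)"
    and ex: "\<And>xs. length xs = k \<Longrightarrow> \<exists>n. f (n # xs) = 0"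
  show "\<exists>r. \<forall>xs. length xs = k \<longrightarrow> eval_recf r xs (LEAST n. f (n # xs) = 0)"
  proof (intro exI[of _ "Mu p"] allI impI)
    fix xs :: "nat list" assume l: "length xs = k"
    obtain n where n: "f (n # xs) = 0" using ex[OF l] by blast
    have 1: "f ((LEAST n. f (n # xs) = 0) # xs) = 0" using n by (rule LeastI)
    show "eval_recf (Mu p) xs (LEAST n. f (n # xs) = 0)"
    proof (rule eval_recf.mu)
      show "eval_recf p ((LEAST n. f (n # xs) = 0) # xs) 0" using p l 1 by (metis length_Cons)
      show "\<forall>m<(LEAST n. f (n # xs) = 0). \<exists>y>0. eval_recf p (m # xs) y"
      proof (intro allI impI)
        fix m assume "m < (LEAST n. f (n # xs) = 0)"
        then have "f (m # xs) \<noteq> 0" using not_less_Least by blast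
        then show "\<exists>y>0. eval_recf p (m # xs) y" using p l by (intro exI[of _ "f (m#xs)"]) auto
      qed
    qed
  qed
qed

lemma ck_cong: "ck k f \<Longrightarrow> (\<And>xs. length xs = k \<Longrightarrow> f xs = g xs) \<Longrightarrow> ck k g"
  unfolding ck_def by auto

lemma ck_computable: "ck 1 f \<Longrightarrow> computable (\<lambda>n. f [n])"
  unfolding ck_def computable_def by (metis length_Cons list.size(3) One_nat_def)

lemma ck_prim_eq: "ck k f \<Longrightarrow> ck (Suc (Suc k)) g \<Longrightarrow> (\<And>n ys. PR f g n ys = h (n # ys)) \<Longrightarrow> ck (Suc k) h"
  by (rule ck_cong[OF ck_prim]) (auto simp: length_Suc_conv)

lemma ck_lift1: "ck 1 (\<lambda>xs. h (xs!0)) \<Longrightarrow> ck k a \<Longrightarrow> ck k (\<lambda>xs. h (a xs))"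
  using ck_comp1[of "\<lambda>xs. h (xs!0)" k a] by simp

lemma ck_lift2: "ck 2 (\<lambda>xs. h (xs!0) (xs!1)) \<Longrightarrow> ck k a \<Longrightarrow> ck k b \<Longrightarrow> ck k (\<lambda>xs. h (a xs) (b xs))"
  using ck_comp2[of "\<lambda>xs. h (xs!0) (xs!1)" k a b] by simp

lemma ck_p0: "ck (Suc k) (\<lambda>xs. xs ! 0)" by (rule ck_proj) simp
lemma ck_p1: "ck (Suc (Suc k)) (\<lambda>xs. xs ! 1)" by (rule ck_proj) simp

lemma ck2_add: "ck 2 (\<lambda>xs. xs!0 + xs!1)"
proof -
  have e: "PR (\<lambda>ys. ys!0) (\<lambda>ys. Suc (ys!0)) n ys = n + ys!0" for n ys
    by (induction n) auto
  have "ck (Suc 1) (\<lambda>zs. zs!0 + zs!1)"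
    by (rule ck_prim_eq[of 1 "\<lambda>ys. ys!0" "\<lambda>ys. Suc (ys!0)"]) (rule ck_proj, simp, rule ck_succ, rule ck_proj, simp, subst e, simp)
  then show ?thesis by (simp add: numeral_2_eq_2)
qed

lemma ck_add: "ck k a \<Longrightarrow> ck k b \<Longrightarrow> ck k (\<lambda>xs. a xs + b xs)"
  by (rule ck_lift2[OF ck2_add])

lemma ck2_mult: "ck 2 (\<lambda>xs. xs!0 * xs!1)"
proof -
  have e: "PR (\<lambda>ys. 0) (\<lambda>ys. ys!0 + ys!2) n ys = n * ys!0" for n ys
    by (induction n) auto
  have "ck (Suc 1) (\<lambda>zs. zs!0 * zs!1)"
    by (rule ck_prim_eq[of 1 "\<lambda>ys. 0" "\<lambda>ys. ys!0 + ys!2"]) (rule ck_const, rule ck_add, rule ck_proj, simp, rule ck_proj, simp, subst e, simp)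
  then show ?thesis by (simp add: numeral_2_eq_2)
qed

lemma ck_mult: "ck k a \<Longrightarrow> ck k b \<Longrightarrow> ck k (\<lambda>xs. a xs * b xs)"
  by (rule ck_lift2[OF ck2_mult])

lemma ck1_pred: "ck 1 (\<lambda>xs. xs!0 - 1)"
proof -
  have e: "PR (\<lambda>ys. 0) (\<lambda>ys. ys!1) n ys = n - 1" for n ys
    by (induction n) auto
  have "ck (Suc 0) (\<lambda>zs. zs!0 - 1)"
    by (rule ck_prim_eq[of 0 "\<lambda>ys. 0" "\<lambda>ys. ys!1"]) (rule ck_const, rule ck_proj, simp, subst e, simp)
  then show ?thesis by simp
qed

lemma ck2_rsub: "ck 2 (\<lambda>xs. xs!1 - xs!0)"
proof -
  have e: "PR (\<lambda>ys. ys!0) (\<lambda>ys. ys!0 - 1) n ys = ys!0 - n" for n ys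
    by (induction n) auto
  have "ck (Suc 1) (\<lambda>zs. zs!1 - zs!0)"
    by (rule ck_prim_eq[of 1 "\<lambda>ys. ys!0" "\<lambda>ys. ys!0 - 1"]) (rule ck_proj, simp, rule ck_lift1[OF ck1_pred], rule ck_proj, simp, subst e, simp)
  then show ?thesis by (simp add: numeral_2_eq_2)
qed

lemma ck_sub: "ck k a \<Longrightarrow> ck k b \<Longrightarrow> ck k (\<lambda>xs. a xs - b xs)"
  using ck_lift2[OF ck2_rsub, of k b a] by simp

lemma ck1_tri: "ck 1 (\<lambda>xs. triangle (xs!0))"
proof -
  have e: "PR (\<lambda>ys. 0) (\<lambda>ys. ys!0 + Suc (ys!1)) n ys = triangle n" for n ys
    by (induction n) auto
  have "ck (Suc 0) (\<lambda>zs. triangle (zs!0))"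
    by (rule ck_prim_eq[of 0 "\<lambda>ys. 0" "\<lambda>ys. ys!0 + Suc (ys!1)"]) (rule ck_const, rule ck_add, rule ck_proj, simp, rule ck_succ, rule ck_proj, simp, subst e, simp)
  then show ?thesis by simp
qed

lemma ck_tri: "ck k a \<Longrightarrow> ck k (\<lambda>xs. triangle (a xs))"
  by (rule ck_lift1[OF ck1_tri])

lemma ck_pe: "ck k a \<Longrightarrow> ck k b \<Longrightarrow> ck k (\<lambda>xs. prod_encode (a xs, b xs))"
  unfolding prod_encode_def by (auto intro!: ck_add ck_tri)

definition dz :: "nat \<Rightarrow> nat" where "dz z = (LEAST s. Suc z - triangle (Suc s) = 0)"

lemma tri_ge: "n \<le> triangle n"
  by (induction n) auto

lemma dz_prop: "triangle (dz z) \<le> z \<and> z < triangle (Suc (dz z))"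
proof -
  have ex: "Suc z - triangle (Suc z) = 0" using tri_ge[of "Suc z"] by simp
  have 1: "Suc z - triangle (Suc (dz z)) = 0" unfolding dz_def using ex by (rule LeastI)
  have 2: "triangle (dz z) \<le> z"
  proof (cases "dz z")
    case 0 then show ?thesis by simp
  next
    case (Suc m)
    then have "m < dz z" by simp
    then have "Suc z - triangle (Suc m) \<noteq> 0" unfolding dz_def using not_less_Least by blast
    then show ?thesis using Suc by simp
  qed
  show ?thesis using 1 2 by simp
qed

lemma prod_decode_dz: "prod_decode z = (z - triangle (dz z), dz z - (z - triangle (dz z)))"
proof -
  have p: "triangle (dz z) \<le> z" "z < triangle (Suc (dz z))" using dz_prop by auto
  have q: "z - triangle (dz z) \<le> dz z" using p by simp
  have "prod_encode (z - triangle (dz z), dz z - (z - triangle (dz z))) = z"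
  proof -
    have 1: "z - triangle (dz z) + (dz z - (z - triangle (dz z))) = dz z" using q by (rule le_add_diff_inverse)
    have 2: "triangle (dz z) + (z - triangle (dz z)) = z" using p(1) by (rule le_add_diff_inverse)
    show ?thesis unfolding prod_encode_def split 1 using 2 by simp
  qed
  then show ?thesis by (metis prod_encode_inverse)
qed

lemma ck1_dz: "ck 1 (\<lambda>xs. dz (xs!0))"
proof -
  have "ck 1 (\<lambda>xs. LEAST s. (\<lambda>ys. Suc (ys!1) - triangle (Suc (ys!0))) (s # xs) = 0)"
  proof (rule ck_mu)
    show "ck (Suc 1) (\<lambda>ys. Suc (ys!1) - triangle (Suc (ys!0)))"
      by (intro ck_sub ck_succ ck_tri ck_proj) auto
    show "\<exists>n. (\<lambda>ys. Suc (ys!1) - triangle (Suc (ys!0))) (n # xs) = 0" for xs :: "nat list"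
      using tri_ge[of "Suc (xs!0)"] by (intro exI[of _ "xs!0"]) simp
  qed
  then show ?thesis by (rule ck_cong) (simp add: dz_def)
qed

lemma ck_fst: "ck k a \<Longrightarrow> ck k (\<lambda>xs. fst (prod_decode (a xs)))"
  unfolding prod_decode_dz fst_conv
  by (intro ck_sub ck_tri ck_lift1[OF ck1_dz])

lemma ck_snd: "ck k a \<Longrightarrow> ck k (\<lambda>xs. snd (prod_decode (a xs)))"
  unfolding prod_decode_dz snd_conv
  by (intro ck_sub ck_tri ck_lift1[OF ck1_dz])

lemma if_arith: "(if (c::nat) = d then a else b) =
   a * (1 - ((c - d) + (d - c))) + b * (1 - (1 - ((c - d) + (d - c))))"
  by auto

lemma ck_if: "ck k c \<Longrightarrow> ck k d \<Longrightarrow> ck k a \<Longrightarrow> ck k b \<Longrightarrow>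
   ck k (\<lambda>xs. if c xs = d xs then a xs else b xs)"
  unfolding if_arith by (intro ck_add ck_mult ck_sub ck_const)

fun hist :: "(nat \<Rightarrow> nat) \<Rightarrow> nat \<Rightarrow> nat" where
  "hist F 0 = 0"
| "hist F (Suc n) = Suc (prod_encode (F n, hist F n))"

definition lk :: "nat \<Rightarrow> nat \<Rightarrow> nat" where
  "lk h d = fst (prod_decode (((\<lambda>h. snd (prod_decode (h - 1))) ^^ d) h - 1))"

lemma lk_hist: "k < n \<Longrightarrow> lk (hist F n) (n - Suc k) = F k"
proof (induction n)
  case 0 then show ?case by simp
next
  case (Suc n)
  show ?case
  proof (cases "k = n")
    case True then show ?thesis by (simp add: lk_def)
  next
    case False
    then have kn: "k < n" using Suc.prems by simp
    then have "Suc n - Suc k = Suc (n - Suc k)" by simp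
    then have "lk (hist F (Suc n)) (Suc n - Suc k) = lk (hist F n) (n - Suc k)"
      unfolding lk_def by (simp only: funpow_Suc_right o_def) simp
    then show ?thesis using Suc.IH[OF kn] by simp
  qed
qed

lemma ck_lk: "ck k a \<Longrightarrow> ck k b \<Longrightarrow> ck k (\<lambda>xs. lk (a xs) (b xs))"
proof -
  have e: "PR (\<lambda>ys. ys!0) (\<lambda>ys. snd (prod_decode (ys!0 - 1))) d ys = ((\<lambda>h. snd (prod_decode (h - 1))) ^^ d) (ys!0)" for d ys
    by (induction d) auto
  have it: "ck (Suc 1) (\<lambda>zs. ((\<lambda>h. snd (prod_decode (h - 1))) ^^ (zs!0)) (zs!1))"
    by (rule ck_prim_eq[of 1 "\<lambda>ys. ys!0" "\<lambda>ys. snd (prod_decode (ys!0 - 1))"])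
      (rule ck_proj, simp, rule ck_snd, rule ck_sub, rule ck_proj, simp, rule ck_const, subst e, simp)
  have "ck 2 (\<lambda>xs. lk (xs!1) (xs!0))"
    unfolding lk_def using it by (intro ck_fst ck_sub ck_const) (simp add: numeral_2_eq_2)
  then show "ck k a \<Longrightarrow> ck k b \<Longrightarrow> ck k (\<lambda>xs. lk (a xs) (b xs))"
    using ck_lift2[of "\<lambda>x y. lk y x" k b a] by simp
qed

lemma ck_cvr:
  assumes H: "ck 2 (\<lambda>xs. H (xs!0) (xs!1))" and F: "\<And>n. F n = H n (hist F n)"
  shows "ck 1 (\<lambda>xs. F (xs!0))"
proof -
  have e: "PR (\<lambda>_. 0) (\<lambda>ys. Suc (prod_encode (H (ys!1) (ys!0), ys!0))) n ys = hist F n" for n ys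
    by (induction n) (auto simp: F[symmetric])
  have h: "ck (Suc 0) (\<lambda>zs. hist F (zs!0))"
    by (rule ck_prim_eq[of 0 "\<lambda>_. 0" "\<lambda>ys. Suc (prod_encode (H (ys!1) (ys!0), ys!0))"])
      (rule ck_const, rule ck_succ, rule ck_pe, rule ck_lift2[OF H], (rule ck_proj, simp)+, subst e, simp)
  have "ck 1 (\<lambda>xs. H (xs!0) (hist F (xs!0)))"
    by (rule ck_lift2[OF H]) (rule ck_proj, simp, use h in simp)
  then show ?thesis by (simp add: F[symmetric])
qed


definition All :: "nat \<Rightarrow> fm \<Rightarrow> fm" where "All x p = Neg (Ex x (Neg p))"
definition Imp :: "fm \<Rightarrow> fm \<Rightarrow> fm" where "Imp p q = Neg (Conj p (Neg q))"
definition Disj :: "fm \<Rightarrow> fm \<Rightarrow> fm" where "Disj p q = Neg (Conj (Neg p) (Neg q))"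
definition AddF :: "nat \<Rightarrow> nat \<Rightarrow> nat \<Rightarrow> fm" where "AddF a b c = Rel 3 [a, b, c]"
definition MulF :: "nat \<Rightarrow> nat \<Rightarrow> nat \<Rightarrow> fm" where "MulF a b c = Rel 4 [a, b, c]"
definition NumF :: "nat \<Rightarrow> fm" where "NumF a = Rel 0 [a]"
definition SetF :: "nat \<Rightarrow> fm" where "SetF a = Rel 1 [a]"
definition MemF :: "nat \<Rightarrow> nat \<Rightarrow> fm" where "MemF a b = Rel 2 [a, b]"
definition OneF :: "nat \<Rightarrow> fm" where "OneF a = Conj (MulF a a a) (Neg (AddF a a a))"
definition ZeroF :: "nat \<Rightarrow> fm" where "ZeroF a = AddF a a a"

abbreviation S2 where "S2 \<equiv> sat (UNIV :: (nat + nat set) set) n2_rel"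

lemma sat_All[simp]: "sat D I e (All x p) \<longleftrightarrow> (\<forall>a\<in>D. sat D I (e(x := a)) p)"
  by (simp add: All_def)
lemma sat_Imp[simp]: "sat D I e (Imp p q) \<longleftrightarrow> (sat D I e p \<longrightarrow> sat D I e q)"
  by (simp add: Imp_def)
lemma sat_Disj[simp]: "sat D I e (Disj p q) \<longleftrightarrow> (sat D I e p \<or> sat D I e q)"
  by (simp add: Disj_def)
lemma sat_AddF[simp]: "S2 e (AddF a b c) \<longleftrightarrow> (\<exists>x y. e a = Inl x \<and> e b = Inl y \<and> e c = Inl (x + y))"
  by (auto simp: AddF_def n2_rel_def)
lemma sat_MulF[simp]: "S2 e (MulF a b c) \<longleftrightarrow> (\<exists>x y. e a = Inl x \<and> e b = Inl y \<and> e c = Inl (x * y))"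
  by (auto simp: MulF_def n2_rel_def)
lemma sat_NumF[simp]: "S2 e (NumF a) \<longleftrightarrow> (\<exists>x. e a = Inl x)"
  by (auto simp: NumF_def n2_rel_def)
lemma sat_SetF[simp]: "S2 e (SetF a) \<longleftrightarrow> (\<exists>A. e a = Inr A)"
  by (auto simp: SetF_def n2_rel_def)
lemma sat_MemF[simp]: "S2 e (MemF a b) \<longleftrightarrow> (\<exists>x A. e a = Inl x \<and> e b = Inr A \<and> x \<in> A)"
  by (auto simp: MemF_def n2_rel_def)
lemma sat_ZeroF[simp]: "S2 e (ZeroF a) \<longleftrightarrow> e a = Inl 0"
  unfolding ZeroF_def sat_AddF by (cases "e a") auto

lemma one_iff: "(x::nat) * x = x \<and> x + x \<noteq> x \<longleftrightarrow> x = 1"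
proof -
  have "x * x = x \<longleftrightarrow> x = 1 \<or> x = 0" using mult_cancel1[of x x 1] by simp
  then show ?thesis by auto
qed

lemma sat_OneF[simp]: "S2 e (OneF a) \<longleftrightarrow> e a = Inl 1"
proof (cases "e a")
  case (Inl x)
  then show ?thesis unfolding OneF_def by simp arith
next
  case (Inr A)
  then show ?thesis unfolding OneF_def by simp
qed

lemma two_tri: "2 * triangle n = n * Suc n"
proof (induction n)
  case 0 then show ?case by simp
next
  case (Suc n)
  have "2 * triangle (Suc n) = 2 * triangle n + 2 * Suc n" by simp
  also have "\<dots> = n * Suc n + 2 * Suc n" using Suc by simp
  also have "\<dots> = Suc n * Suc (Suc n)" by (simp only: mult.commute[of n] mult.commute[of 2]) (simp add: distrib_left)
  finally show ?case .
qed


lemma ex_sum: "(\<exists>v::'a + 'b. P v) \<longleftrightarrow> (\<exists>n. P (Inl n)) \<or> (\<exists>A. P (Inr A))"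
  by (metis sum.exhaust)
lemma all_sum: "(\<forall>v::'a + 'b. P v) \<longleftrightarrow> (\<forall>n. P (Inl n)) \<and> (\<forall>A. P (Inr A))"
  by (metis sum.exhaust)

definition PairF :: "nat \<Rightarrow> nat \<Rightarrow> nat \<Rightarrow> fm" where
  "PairF z a b = Ex 21 (Conj (AddF a b 21) (Ex 23 (Conj (OneF 23) (Ex 22 (Conj (AddF 21 23 22)
     (Ex 24 (Conj (MulF 21 22 24) (Ex 25 (Conj (AddF z z 25) (Ex 26 (Conj (AddF 24 a 26) (AddF 26 a 25))))))))))))"

lemma pe_arith: "zz + zz = (x + y) * (x + y + 1) + x + x \<longleftrightarrow> zz = prod_encode (x, y)"
proof -
  have h: "(x + y) * (x + y + 1) = 2 * triangle (x + y)" using two_tri[of "x+y"] by simp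
  show ?thesis unfolding h prod_encode_def by auto
qed

lemma sat_PairF[simp]:
  assumes "z \<notin> {21..26}" "a \<notin> {21..26}" "b \<notin> {21..26}"
  shows "S2 e (PairF z a b) \<longleftrightarrow> (\<exists>x y. e a = Inl x \<and> e b = Inl y \<and> e z = Inl (prod_encode (x, y)))"
proof -
  have ne: "z \<noteq> 21" "z \<noteq> 22" "z \<noteq> 23" "z \<noteq> 24" "z \<noteq> 25" "z \<noteq> 26"
    "a \<noteq> 21" "a \<noteq> 22" "a \<noteq> 23" "a \<noteq> 24" "a \<noteq> 25" "a \<noteq> 26"
    "b \<noteq> 21" "b \<noteq> 22" "b \<noteq> 23" "b \<noteq> 24" "b \<noteq> 25" "b \<noteq> 26" using assms by auto
  have "S2 e (PairF z a b) \<longleftrightarrow> (\<exists>x y zz. e a = Inl x \<and> e b = Inl y \<and> e z = Inl zz \<and>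
          zz + zz = (x + y) * (x + y + 1) + x + x)"
    unfolding PairF_def by (simp add: ne ex_sum) auto
  then show ?thesis by (simp only: pe_arith) blast
qed


lemma sat_fv: "(\<forall>v\<in>fv p. e v = e' v) \<Longrightarrow> sat D I e p = sat D I e' p"
proof (induction p arbitrary: e e')
  case (Rel r xs)
  then have "map e xs = map e' xs" by simp
  then show ?case by (simp only: sat.simps)
next
  case (Ex x p)
  have "sat D I (e(x := a)) p = sat D I (e'(x := a)) p" for a
    using Ex.prems by (intro Ex.IH) auto
  then show ?case by simp
next
  case (Conj p q)
  then show ?case by (metis Un_iff sat.simps(4) fv.simps(4))
qed auto

lemma all_odd: "(\<forall>k::nat. odd k \<longrightarrow> P k) \<longleftrightarrow> (\<forall>q. P (Suc (q + q)))"
  by (metis oddE add_self_div_2 dvd_triv_left even_add odd_one Suc_eq_plus1 mult_2)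

definition C1F :: "nat \<Rightarrow> fm" where
  "C1F S = All 43 (All 44 (All 45 (All 46 (Imp (Conj (ZeroF 43) (Conj (OneF 44)
      (Ex 47 (Conj (AddF 45 45 47) (AddF 47 44 46))))) (Ex 48 (Conj (PairF 48 43 46) (MemF 48 S)))))))"

definition C2F :: "nat \<Rightarrow> fm" where
  "C2F S = All 49 (All 50 (All 51 (All 44 (Imp (Conj (OneF 44) (Conj (Disj (AddF 51 51 50)
      (Ex 47 (Conj (AddF 51 51 47) (AddF 47 44 50)))) (Ex 48 (Conj (PairF 48 49 51) (MemF 48 S)))))
      (Ex 48 (Ex 52 (Conj (AddF 49 44 52) (Conj (PairF 48 52 50) (MemF 48 S)))))))))"

definition ClosedF :: "nat \<Rightarrow> fm" where
  "ClosedF S = Conj (SetF S) (Conj (C1F S) (C2F S))"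

definition cl :: "nat set \<Rightarrow> bool" where
  "cl A \<longleftrightarrow> (\<forall>q. prod_encode (0, Suc (q + q)) \<in> A) \<and>
     (\<forall>m q. prod_encode (m, q) \<in> A \<longrightarrow> prod_encode (Suc m, q + q) \<in> A \<and> prod_encode (Suc m, Suc (q + q)) \<in> A)"

lemma sat_C1F:
  assumes "S \<notin> {21..26}" "S \<notin> {43..48}" "e S = Inr A"
  shows "S2 e (C1F S) \<longleftrightarrow> (\<forall>q. prod_encode (0, Suc (q + q)) \<in> A)"
proof -
  have ne: "S \<noteq> 43" "S \<noteq> 44" "S \<noteq> 45" "S \<noteq> 46" "S \<noteq> 47" "S \<noteq> 48" using assms by auto
  show ?thesis unfolding C1F_def using assms(3) by (simp add: ne ex_sum all_sum)
qed

lemma sat_C2F: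
  assumes "S \<notin> {21..26}" "S \<notin> {44..52}" "e S = Inr A"
  shows "S2 e (C2F S) \<longleftrightarrow> (\<forall>m q. prod_encode (m, q) \<in> A \<longrightarrow> prod_encode (Suc m, q + q) \<in> A \<and> prod_encode (Suc m, Suc (q + q)) \<in> A)"
proof -
  have ne: "S \<noteq> 44" "S \<noteq> 47" "S \<noteq> 48" "S \<noteq> 49" "S \<noteq> 50" "S \<noteq> 51" "S \<noteq> 52" using assms by auto
  show ?thesis unfolding C2F_def using assms(3) by (simp add: ne ex_sum all_sum) auto
qed


lemma sat_ClosedF:
  assumes "S \<notin> {21..26}" "S \<notin> {43..52}"
  shows "S2 e (ClosedF S) \<longleftrightarrow> (\<exists>A. e S = Inr A \<and> cl A)"
proof (cases "e S")
  case (Inl x)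
  then show ?thesis unfolding ClosedF_def by simp
next
  case (Inr A)
  have "S \<notin> {44..52}" "S \<notin> {43..48}" using assms by auto
  then show ?thesis unfolding ClosedF_def cl_def using Inr assms sat_C1F sat_C2F by simp
qed

lemma cl_dec: "cl A \<Longrightarrow> m \<in> set_decode k \<Longrightarrow> prod_encode (m, k) \<in> A"
proof (induction m arbitrary: k)
  case 0
  then obtain q where "k = Suc (q + q)" by (metis oddE set_decode_0 mult_2 Suc_eq_plus1)
  then show ?case using 0 unfolding cl_def by simp
next
  case (Suc m)
  then have 1: "prod_encode (m, k div 2) \<in> A" by simp
  have "k = k div 2 + k div 2 \<or> k = Suc (k div 2 + k div 2)" by presburger
  then show ?case using 1 Suc.prems(1) unfolding cl_def by metis
qed

lemma cl_decset: "cl {prod_encode (m, k) | m k. m \<in> set_decode k}"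
proof -
  have a: "(q + q) div 2 = q" "Suc (q + q) div 2 = q" for q :: nat by presburger+
  have b: "odd (Suc (q + q))" for q :: nat by presburger
  show ?thesis unfolding cl_def using a b by auto
qed

definition InDecF :: "nat \<Rightarrow> nat \<Rightarrow> fm" where
  "InDecF m k = All 41 (Imp (ClosedF 41) (Ex 42 (Conj (PairF 42 m k) (MemF 42 41))))"

lemma sat_InDecF:
  assumes "m \<notin> {21..26}" "m \<notin> {41..52}" "k \<notin> {21..26}" "k \<notin> {41..52}"
  shows "S2 e (InDecF m k) \<longleftrightarrow> (\<exists>x y. e m = Inl x \<and> e k = Inl y \<and> x \<in> set_decode y)"
proof -
  have ne: "m \<noteq> 41" "m \<noteq> 42" "k \<noteq> 41" "k \<noteq> 42" using assms by auto
  have "S2 e (InDecF m k) \<longleftrightarrow> (\<forall>A. cl A \<longrightarrow> (\<exists>x y. e m = Inl x \<and> e k = Inl y \<and> prod_encode (x, y) \<in> A))"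
    unfolding InDecF_def using assms by (simp add: ne ex_sum all_sum sat_ClosedF) blast
  also have "\<dots> \<longleftrightarrow> (\<exists>x y. e m = Inl x \<and> e k = Inl y \<and> x \<in> set_decode y)"
  proof
    assume h: "\<forall>A. cl A \<longrightarrow> (\<exists>x y. e m = Inl x \<and> e k = Inl y \<and> prod_encode (x, y) \<in> A)"
    from h[rule_format, OF cl_decset] show "\<exists>x y. e m = Inl x \<and> e k = Inl y \<and> x \<in> set_decode y"
      by auto
  next
    assume "\<exists>x y. e m = Inl x \<and> e k = Inl y \<and> x \<in> set_decode y"
    then show "\<forall>A. cl A \<longrightarrow> (\<exists>x y. e m = Inl x \<and> e k = Inl y \<and> prod_encode (x, y) \<in> A)"
      using cl_dec by blast
  qed
  finally show ?thesis .
qed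

definition RF :: "fm \<Rightarrow> nat \<Rightarrow> nat \<Rightarrow> fm" where
  "RF p0 i k = Ex 0 (Conj (PairF 0 i k) p0)"

lemma sat_RF:
  assumes "fv p0 \<subseteq> {0}" "i \<notin> {21..26}" "k \<notin> {21..26}" "i \<noteq> 0" "k \<noteq> 0"
  shows "S2 e (RF p0 i k) \<longleftrightarrow> (\<exists>x y. e i = Inl x \<and> e k = Inl y \<and> S2 (\<lambda>_. Inl (prod_encode (x, y))) p0)"
proof -
  have fv: "S2 (e(0 := v)) p0 = S2 (\<lambda>_. v) p0" for v
    using assms(1) by (intro sat_fv) auto
  show ?thesis unfolding RF_def using assms by (simp add: fv) blast
qed


definition SubF :: "fm \<Rightarrow> nat \<Rightarrow> nat \<Rightarrow> fm" where
  "SubF p0 x y = All 1 (Imp (MemF 1 x) (All 3 (Imp (NumF 3)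
     (Imp (Ex 5 (Conj (NumF 5) (Conj (All 7 (Imp (InDecF 7 5) (Eq 7 1))) (RF p0 3 5))))
          (Ex 5 (Conj (NumF 5) (Conj (All 7 (Imp (InDecF 7 5) (MemF 7 y))) (RF p0 3 5))))))))"

lemma sat_SubF:
  assumes p0: "fv p0 \<subseteq> {0}" and xy: "x \<notin> {1,3,5,7}" "y \<notin> {1,3,5,7}"
    and I: "e x = Inr I" and J: "e y = Inr J"
  shows "S2 e (SubF p0 x y) \<longleftrightarrow> (\<forall>n\<in>I. \<forall>i.
      (\<exists>k. set_decode k \<subseteq> {n} \<and> S2 (\<lambda>_. Inl (prod_encode (i, k))) p0) \<longrightarrow>
      (\<exists>k. set_decode k \<subseteq> J \<and> S2 (\<lambda>_. Inl (prod_encode (i, k))) p0))"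
proof -
  have ne: "x \<noteq> 1" "x \<noteq> 3" "x \<noteq> 5" "x \<noteq> 7" "y \<noteq> 1" "y \<noteq> 3" "y \<noteq> 5" "y \<noteq> 7" "x \<noteq> Suc 0" "y \<noteq> Suc 0" using xy by auto
  have R: "S2 e' (RF p0 3 5) \<longleftrightarrow> (\<exists>a b. e' 3 = Inl a \<and> e' 5 = Inl b \<and> S2 (\<lambda>_. Inl (prod_encode (a, b))) p0)" for e'
    using p0 by (intro sat_RF) auto
  have D: "S2 e' (InDecF 7 5) \<longleftrightarrow> (\<exists>a b. e' 7 = Inl a \<and> e' 5 = Inl b \<and> a \<in> set_decode b)" for e'
    by (intro sat_InDecF) auto
  show ?thesis unfolding SubF_def using I J by (simp add: ne ex_sum all_sum R D subset_iff Ball_def)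
qed




lemmas fdefs = All_def Imp_def Disj_def AddF_def MulF_def NumF_def SetF_def MemF_def OneF_def ZeroF_def

lemma fv_PairF: "z \<notin> {21..26} \<Longrightarrow> a \<notin> {21..26} \<Longrightarrow> b \<notin> {21..26} \<Longrightarrow> fv (PairF z a b) = {z, a, b}"
  by (auto simp: PairF_def fdefs)
lemma wf_PairF: "wf_fm n2_sig (PairF z a b)"
  by (simp add: PairF_def fdefs n2_sig_def)

lemma fv_C1F: "S \<notin> {21..26} \<Longrightarrow> S \<notin> {43..48} \<Longrightarrow> fv (C1F S) = {S}"
  by (auto simp: C1F_def fdefs fv_PairF)
lemma fv_C2F: "S \<notin> {21..26} \<Longrightarrow> S \<notin> {44..52} \<Longrightarrow> fv (C2F S) = {S}"
  by (auto simp: C2F_def fdefs fv_PairF)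
lemma fv_ClosedF: "S \<notin> {21..26} \<Longrightarrow> S \<notin> {43..52} \<Longrightarrow> fv (ClosedF S) = {S}"
  by (auto simp: ClosedF_def fdefs fv_C1F fv_C2F)
lemma fv_InDecF: "m \<notin> {21..26} \<Longrightarrow> m \<notin> {41..52} \<Longrightarrow> k \<notin> {21..26} \<Longrightarrow> k \<notin> {41..52} \<Longrightarrow>
   fv (InDecF m k) = {m, k}"
  by (auto simp: InDecF_def fdefs fv_PairF fv_ClosedF)
lemma fv_RF: "fv p0 \<subseteq> {0} \<Longrightarrow> i \<notin> {21..26} \<Longrightarrow> k \<notin> {21..26} \<Longrightarrow> i \<noteq> 0 \<Longrightarrow> k \<noteq> 0 \<Longrightarrow>
   fv (RF p0 i k) = {i, k}"
  by (auto simp: RF_def fv_PairF)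
lemma fv_SubF: "fv p0 \<subseteq> {0} \<Longrightarrow> x \<notin> {1,3,5,7} \<Longrightarrow> y \<notin> {1,3,5,7} \<Longrightarrow> fv (SubF p0 x y) = {x, y}"
  by (auto simp: SubF_def fdefs fv_InDecF fv_RF)

lemma wf_SubF: "wf_fm n2_sig p0 \<Longrightarrow> wf_fm n2_sig (SubF p0 x y)"
  by (simp add: SubF_def fdefs n2_sig_def InDecF_def ClosedF_def C1F_def C2F_def RF_def wf_PairF)


fun T :: "fm \<Rightarrow> fm \<Rightarrow> fm" where
  "T p0 (Eq i j) = Conj (SubF p0 (2 * i) (2 * j)) (SubF p0 (2 * j) (2 * i))"
| "T p0 (Rel r xs) = (if r = 0 \<and> length xs = 2 then SubF p0 (2 * (xs ! 0)) (2 * (xs ! 1)) else Rel 7 [])"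
| "T p0 (Neg p) = Neg (T p0 p)"
| "T p0 (Conj p q) = Conj (T p0 p) (T p0 q)"
| "T p0 (Ex x p) = Ex (2 * x) (Conj (SetF (2 * x)) (T p0 p))"

lemma even_not_odd_vars: "(2::nat) * i \<notin> {1,3,5,7}"
  by (auto; presburger)

lemma fvS: "fv p0 \<subseteq> {0} \<Longrightarrow> fv (SubF p0 (2 * i) (2 * j)) = {2 * i, 2 * j}"
  by (rule fv_SubF) (auto simp only: even_not_odd_vars)

lemma dec_single: "set_decode (2 ^ n) = {n}"
  using set_encode_inverse[of "{n}"] by simp

lemma wf_T:
  assumes "wf_fm n2_sig p0" "fv p0 \<subseteq> {0}"
  shows "wf_fm lat_sig p \<Longrightarrow> wf_fm n2_sig (T p0 p) \<and> fv (T p0 p) = (\<lambda>v. 2 * v) ` fv p"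
proof (induction p)
  case (Eq i j)
  then show ?case using assms by (simp add: wf_SubF fvS) blast
next
  case (Rel r xs)
  then have "r = 0" "length xs = 2" by (auto simp: lat_sig_def split: if_splits)
  then obtain a b where "xs = [a, b]" by (metis (no_types, lifting) One_nat_def Suc_1 length_0_conv length_Suc_conv)
  then show ?case using assms \<open>r = 0\<close> by (simp add: wf_SubF fvS)
next
  case (Ex x p)
  then show ?case by (auto simp: SetF_def n2_sig_def)
qed auto

lemma not_wf_T: "\<not> wf_fm lat_sig p \<Longrightarrow> \<not> wf_fm n2_sig (T p0 p)"
  by (induction p) (auto simp: lat_sig_def n2_sig_def SetF_def split: if_splits)

lemma sub_iff:
  assumes bo: "\<And>n. openin X (\<beta> n)" and comp: "\<And>i. compactin X (\<kappa> i)"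
    and cov: "\<And>n. \<exists>I. \<beta> n = \<Union> (\<kappa> ` I)"
  shows "(\<forall>n\<in>I. \<forall>i. (\<exists>k. set_decode k \<subseteq> {n} \<and> \<kappa> i \<subseteq> \<Union> (\<beta> ` set_decode k)) \<longrightarrow>
            (\<exists>k. set_decode k \<subseteq> J \<and> \<kappa> i \<subseteq> \<Union> (\<beta> ` set_decode k)))
         \<longleftrightarrow> \<Union> (\<beta> ` I) \<subseteq> \<Union> (\<beta> ` J)"
proof
  assume h: "\<forall>n\<in>I. \<forall>i. (\<exists>k. set_decode k \<subseteq> {n} \<and> \<kappa> i \<subseteq> \<Union> (\<beta> ` set_decode k)) \<longrightarrow>
            (\<exists>k. set_decode k \<subseteq> J \<and> \<kappa> i \<subseteq> \<Union> (\<beta> ` set_decode k))"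
  show "\<Union> (\<beta> ` I) \<subseteq> \<Union> (\<beta> ` J)"
  proof
    fix x assume "x \<in> \<Union> (\<beta> ` I)"
    then obtain n where n: "n \<in> I" "x \<in> \<beta> n" by auto
    obtain I' where I': "\<beta> n = \<Union> (\<kappa> ` I')" using cov by blast
    then obtain i where i: "x \<in> \<kappa> i" "\<kappa> i \<subseteq> \<beta> n" using n(2) by auto
    have "set_decode (set_encode {n}) \<subseteq> {n} \<and> \<kappa> i \<subseteq> \<Union> (\<beta> ` set_decode (set_encode {n}))"
      using i by (simp add: dec_single)
    then obtain k where "set_decode k \<subseteq> J" "\<kappa> i \<subseteq> \<Union> (\<beta> ` set_decode k)" using h n(1) by blast
    then show "x \<in> \<Union> (\<beta> ` J)" using i(1) by blast
  qed
next
  assume h: "\<Union> (\<beta> ` I) \<subseteq> \<Union> (\<beta> ` J)"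
  show "\<forall>n\<in>I. \<forall>i. (\<exists>k. set_decode k \<subseteq> {n} \<and> \<kappa> i \<subseteq> \<Union> (\<beta> ` set_decode k)) \<longrightarrow>
            (\<exists>k. set_decode k \<subseteq> J \<and> \<kappa> i \<subseteq> \<Union> (\<beta> ` set_decode k))"
  proof (intro ballI allI impI)
    fix n i assume n: "n \<in> I" and "\<exists>k. set_decode k \<subseteq> {n} \<and> \<kappa> i \<subseteq> \<Union> (\<beta> ` set_decode k)"
    then have "\<kappa> i \<subseteq> \<beta> n" by blast
    then have sub: "\<kappa> i \<subseteq> \<Union> (\<beta> ` J)" using h n by blast
    obtain F where F: "finite F" "F \<subseteq> \<beta> ` J" "\<kappa> i \<subseteq> \<Union> F"
      using comp[of i] sub bo unfolding compactin_def by (metis (no_types, lifting) image_iff)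
    obtain J' where J': "J' \<subseteq> J" "finite J'" "F = \<beta> ` J'" using F(1,2) by (metis finite_subset_image)
    show "\<exists>k. set_decode k \<subseteq> J \<and> \<kappa> i \<subseteq> \<Union> (\<beta> ` set_decode k)"
      using J' F(3) by (intro exI[of _ "set_encode J'"]) simp
  qed
qed


locale setting =
  fixes X :: "'a topology" and \<beta> \<kappa> :: "nat \<Rightarrow> 'a set" and p0 :: fm
  assumes p0: "fv p0 \<subseteq> {0}" and wf0: "wf_fm n2_sig p0"
    and Q: "\<And>i k. S2 (\<lambda>_. Inl (prod_encode (i, k))) p0 \<longleftrightarrow> \<kappa> i \<subseteq> \<Union> (\<beta> ` set_decode k)"
    and bo: "\<And>n. openin X (\<beta> n)" and comp: "\<And>i. compactin X (\<kappa> i)"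
    and cov: "\<And>n. \<exists>I. \<beta> n = \<Union> (\<kappa> ` I)"
    and base: "\<And>U. openin X U \<Longrightarrow> \<exists>I. U = \<Union> (\<beta> ` I)"
begin

lemma sat_Sub2:
  assumes "e' (2 * a) = Inr I" "e' (2 * b) = Inr J"
  shows "S2 e' (SubF p0 (2 * a) (2 * b)) \<longleftrightarrow> \<Union> (\<beta> ` I) \<subseteq> \<Union> (\<beta> ` J)"
proof -
  have "S2 e' (SubF p0 (2 * a) (2 * b)) \<longleftrightarrow> (\<forall>n\<in>I. \<forall>i.
      (\<exists>k. set_decode k \<subseteq> {n} \<and> S2 (\<lambda>_. Inl (prod_encode (i, k))) p0) \<longrightarrow>
      (\<exists>k. set_decode k \<subseteq> J \<and> S2 (\<lambda>_. Inl (prod_encode (i, k))) p0))"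
    by (rule sat_SubF[OF p0 even_not_odd_vars even_not_odd_vars assms])
  also have "\<dots> \<longleftrightarrow> \<Union> (\<beta> ` I) \<subseteq> \<Union> (\<beta> ` J)"
    unfolding Q by (rule sub_iff[OF bo comp cov])
  finally show ?thesis .
qed

lemma sem_T:
  "wf_fm lat_sig p \<Longrightarrow> (\<forall>v\<in>fv p. \<exists>I. e' (2 * v) = Inr I \<and> e v = \<Union> (\<beta> ` I)) \<Longrightarrow>
   sat {U. openin X U} lat_rel e p \<longleftrightarrow> S2 e' (T p0 p)"
proof (induction p arbitrary: e e')
  case (Eq i j)
  obtain I where I: "e' (2 * i) = Inr I" "e i = \<Union> (\<beta> ` I)" using Eq.prems by auto
  obtain J where J: "e' (2 * j) = Inr J" "e j = \<Union> (\<beta> ` J)" using Eq.prems by auto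
  show ?case using I J by (auto simp: sat_Sub2)
next
  case (Rel r xs)
  then have "r = 0" "length xs = 2" by (auto simp: lat_sig_def split: if_splits)
  then obtain a b where ab: "xs = [a, b]" by (metis (no_types, lifting) One_nat_def Suc_1 length_0_conv length_Suc_conv)
  obtain I where I: "e' (2 * a) = Inr I" "e a = \<Union> (\<beta> ` I)" using Rel.prems ab by auto
  obtain J where J: "e' (2 * b) = Inr J" "e b = \<Union> (\<beta> ` J)" using Rel.prems ab by auto
  show ?case using I J ab \<open>r = 0\<close> by (auto simp: sat_Sub2 lat_rel_def)
next
  case (Neg p)
  then show ?case by simp
next
  case (Conj p q)
  have "sat {U. openin X U} lat_rel e p \<longleftrightarrow> S2 e' (T p0 p)" using Conj by (intro Conj.IH(1)) auto
  moreover have "sat {U. openin X U} lat_rel e q \<longleftrightarrow> S2 e' (T p0 q)" using Conj by (intro Conj.IH(2)) auto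
  ultimately show ?case by simp
next
  case (Ex x p)
  have wf: "wf_fm lat_sig p" using Ex.prems by simp
  show ?case
  proof
    assume "sat {U. openin X U} lat_rel e (Ex x p)"
    then obtain U where U: "openin X U" "sat {U. openin X U} lat_rel (e(x := U)) p" by auto
    obtain I where I: "U = \<Union> (\<beta> ` I)" using base[OF U(1)] by blast
    have rel: "\<forall>v\<in>fv p. \<exists>J. (e'(2 * x := Inr I)) (2 * v) = Inr J \<and> (e(x := U)) v = \<Union> (\<beta> ` J)"
    proof
      fix v assume v: "v \<in> fv p"
      show "\<exists>J. (e'(2 * x := Inr I)) (2 * v) = Inr J \<and> (e(x := U)) v = \<Union> (\<beta> ` J)"
      proof (cases "v = x")
        case True then show ?thesis using I by simp
      next
        case False then show ?thesis using Ex.prems(2) v by simp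
      qed
    qed
    have "S2 (e'(2 * x := Inr I)) (T p0 p)"
      using U(2) Ex.IH[OF wf rel] by blast
    then show "S2 e' (T p0 (Ex x p))" by (auto intro!: bexI[of _ "Inr I"])
  next
    assume "S2 e' (T p0 (Ex x p))"
    then obtain I where I: "S2 (e'(2 * x := Inr I)) (T p0 p)" by (auto simp: ex_sum)
    have o: "openin X (\<Union> (\<beta> ` I))" using bo by auto
    have rel: "\<forall>v\<in>fv p. \<exists>J. (e'(2 * x := Inr I)) (2 * v) = Inr J \<and> (e(x := \<Union> (\<beta> ` I))) v = \<Union> (\<beta> ` J)"
    proof
      fix v assume v: "v \<in> fv p"
      show "\<exists>J. (e'(2 * x := Inr I)) (2 * v) = Inr J \<and> (e(x := \<Union> (\<beta> ` I))) v = \<Union> (\<beta> ` J)"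
      proof (cases "v = x")
        case True then show ?thesis by simp
      next
        case False then show ?thesis using Ex.prems(2) v by simp
      qed
    qed
    have "sat {U. openin X U} lat_rel (e(x := \<Union> (\<beta> ` I))) p"
      using I Ex.IH[OF wf rel] by blast
    then show "sat {U. openin X U} lat_rel e (Ex x p)" using o by auto
  qed
qed

end


lemmas ck_rules = ck_const ck_pe ck_succ ck_add ck_mult ck_sub ck_fst ck_snd ck_if ck_lk

lemma ck_code_SubF:
  assumes "ck k a" "ck k b"
  shows "ck k (\<lambda>xs. code (SubF p0 (a xs) (b xs)))"
  unfolding SubF_def fdefs InDecF_def ClosedF_def C1F_def C2F_def RF_def PairF_def
  by (simp only: code.simps list_encode.simps) (intro ck_rules assms)


abbreviation pd1 :: "nat \<Rightarrow> nat" where "pd1 n \<equiv> fst (prod_decode n)"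
abbreviation pd2 :: "nat \<Rightarrow> nat" where "pd2 n \<equiv> snd (prod_decode n)"

definition RC :: "fm \<Rightarrow> nat \<Rightarrow> nat \<Rightarrow> nat" where
  "RC p0 r c = (if r = 0 then (if c = 0 then code (Rel 7 []) else if pd2 (c - 1) = 0 then code (Rel 7 [])
      else if pd2 (pd2 (c - 1) - 1) = 0 then code (SubF p0 (2 * pd1 (c - 1)) (2 * pd1 (pd2 (c - 1) - 1)))
      else code (Rel 7 [])) else code (Rel 7 []))"

definition Hf :: "fm \<Rightarrow> (nat \<Rightarrow> nat) \<Rightarrow> nat \<Rightarrow> nat" where
  "Hf p0 G n = (if pd1 n = 0 then code (Conj (SubF p0 (2 * pd1 (pd2 n)) (2 * pd2 (pd2 n))) (SubF p0 (2 * pd2 (pd2 n)) (2 * pd1 (pd2 n))))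
   else if pd1 n = 1 then RC p0 (pd1 (pd2 n)) (pd2 (pd2 n))
   else if pd1 n = 2 then prod_encode (2, G (pd2 n))
   else if pd1 n = 3 then prod_encode (3, prod_encode (G (pd1 (pd2 n)), G (pd2 (pd2 n))))
   else if pd1 n = 4 then prod_encode (4, prod_encode (2 * pd1 (pd2 n), prod_encode (3, prod_encode (code (SetF (2 * pd1 (pd2 n))), G (pd2 (pd2 n))))))
   else code (Rel 7 []))"

lemma pd_cases: obtains a b where "prod_decode n = (a, b)" "n = prod_encode (a, b)"
  by (metis prod_decode_inverse surj_pair)

lemma pd2_less: "pd1 n \<noteq> 0 \<Longrightarrow> pd2 n < n"
proof -
  assume a: "pd1 n \<noteq> 0"
  obtain x y where xy: "prod_decode n = (x, y)" "n = prod_encode (x, y)" by (rule pd_cases)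
  have "x + y \<le> triangle (x + y)" by (rule tri_ge)
  then show ?thesis using a xy unfolding prod_encode_def by simp
qed

lemma pd1_le: "pd1 n \<le> n"
proof -
  obtain x y where xy: "prod_decode n = (x, y)" "n = prod_encode (x, y)" by (rule pd_cases)
  then show ?thesis using le_prod_encode_1[of x y] by simp
qed

lemma pd2_le: "pd2 n \<le> n"
proof -
  obtain x y where xy: "prod_decode n = (x, y)" "n = prod_encode (x, y)" by (rule pd_cases)
  then show ?thesis using le_prod_encode_2[of y x] by simp
qed

lemma lt1: "pd1 n \<noteq> 0 \<Longrightarrow> pd1 (pd2 n) < n"
  using le_less_trans[OF pd1_le pd2_less] .
lemma lt2: "pd1 n \<noteq> 0 \<Longrightarrow> pd2 (pd2 n) < n"
  using le_less_trans[OF pd2_le pd2_less] .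

function Fn :: "fm \<Rightarrow> nat \<Rightarrow> nat" where
  "Fn p0 n = (if pd1 n = 0 then code (Conj (SubF p0 (2 * pd1 (pd2 n)) (2 * pd2 (pd2 n))) (SubF p0 (2 * pd2 (pd2 n)) (2 * pd1 (pd2 n))))
   else if pd1 n = 1 then RC p0 (pd1 (pd2 n)) (pd2 (pd2 n))
   else if pd1 n = 2 then prod_encode (2, Fn p0 (pd2 n))
   else if pd1 n = 3 then prod_encode (3, prod_encode (Fn p0 (pd1 (pd2 n)), Fn p0 (pd2 (pd2 n))))
   else if pd1 n = 4 then prod_encode (4, prod_encode (2 * pd1 (pd2 n), prod_encode (3, prod_encode (code (SetF (2 * pd1 (pd2 n))), Fn p0 (pd2 (pd2 n))))))
   else code (Rel 7 []))"
  by auto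
termination
  by (relation "measure (\<lambda>(p0, n). n)") (simp_all add: pd2_less lt1 lt2)

declare Fn.simps[simp del]

lemma Fn_Hf: "Fn p0 n = Hf p0 (Fn p0) n"
  by (subst Fn.simps) (simp only: Hf_def)

lemma Hf_cong: "(\<And>k. k < n \<Longrightarrow> G k = G' k) \<Longrightarrow> Hf p0 G n = Hf p0 G' n"
  unfolding Hf_def by (simp add: pd2_less lt1 lt2)

lemma ck_RC: "ck k a \<Longrightarrow> ck k b \<Longrightarrow> ck k (\<lambda>xs. RC p0 (a xs) (b xs))"
  unfolding RC_def
  by (simp only: code.simps list_encode.simps) (intro ck_rules ck_code_SubF)

lemma ck2_0: "ck 2 (\<lambda>xs. xs!0)" by (rule ck_proj) simp
lemma ck2_1: "ck 2 (\<lambda>xs. xs!1)" by (rule ck_proj) simp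

lemma ck_Hf: "ck 2 (\<lambda>xs. Hf p0 (\<lambda>k. lk (xs!1) (xs!0 - Suc k)) (xs!0))"
  unfolding Hf_def SetF_def
  by (simp only: code.simps list_encode.simps) (intro ck_rules ck_code_SubF ck_RC ck2_0 ck2_1)

lemma ck_Fn: "ck 1 (\<lambda>xs. Fn p0 (xs!0))"
proof (rule ck_cvr[OF ck_Hf])
  fix n
  show "Fn p0 n = Hf p0 (\<lambda>k. lk (hist (Fn p0) n) (n - Suc k)) n"
    by (subst Fn_Hf) (rule Hf_cong, simp add: lk_hist)
qed

lemma computable_Fn: "computable (Fn p0)"
  using ck_computable[OF ck_Fn[of p0]] by simp


lemma RC_correct: "RC p0 r (list_encode xs) = code (T p0 (Rel r xs))"
proof (cases "r = 0")
  case False then show ?thesis by (simp add: RC_def)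
next
  case True
  show ?thesis
  proof (cases xs)
    case Nil then show ?thesis using True by (simp add: RC_def)
  next
    case (Cons a ys)
    show ?thesis
    proof (cases ys)
      case Nil then show ?thesis using True Cons by (simp add: RC_def)
    next
      case (Cons b zs)
      then show ?thesis using True \<open>xs = a # ys\<close>
        by (cases zs) (auto simp: RC_def list_encode_eq[of _ "[]", simplified])
    qed
  qed
qed

lemma Fn_code: "Fn p0 (code p) = code (T p0 p)"
proof (induction p)
  case (Eq i j)
  show ?case by (subst Fn_Hf) (simp add: Hf_def)
next
  case (Rel r xs)
  show ?case by (subst Fn_Hf) (simp add: Hf_def RC_correct)
next
  case (Neg p)
  show ?case by (subst Fn_Hf) (simp add: Hf_def Neg.IH)
next
  case (Conj p q)
  show ?case by (subst Fn_Hf) (simp add: Hf_def Conj.IH)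
next
  case (Ex x p)
  show ?case by (subst Fn_Hf) (simp add: Hf_def Ex.IH SetF_def)
qed

lemma code_inj: "code p = code q \<Longrightarrow> p = q"
proof (induction p arbitrary: q)
  case (Eq i j) then show ?case by (cases q) auto
next
  case (Rel r xs) then show ?case by (cases q) (auto simp: list_encode_eq)
next
  case (Neg p) then show ?case by (cases q) auto
next
  case (Conj p1 p2) then show ?case by (cases q) auto
next
  case (Ex x p) then show ?case by (cases q) auto
qed

lemma RC_is_code: "\<exists>q. RC p0 r c = code q"
  unfolding RC_def by (auto simp del: code.simps split: if_splits)

lemma Fn_is_code: "\<exists>q. Fn p0 n = code q"
proof (induction n rule: less_induct)
  case (less n)
  have r: "pd1 n \<noteq> 0 \<Longrightarrow> \<exists>q. Fn p0 (pd2 n) = code q" using less.IH pd2_less by blast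
  have a: "pd1 n \<noteq> 0 \<Longrightarrow> \<exists>q. Fn p0 (pd1 (pd2 n)) = code q" using less.IH lt1 by blast
  have b: "pd1 n \<noteq> 0 \<Longrightarrow> \<exists>q. Fn p0 (pd2 (pd2 n)) = code q" using less.IH lt2 by blast
  show ?case
  proof (cases "pd1 n = 0")
    case True then show ?thesis by (subst Fn_Hf) (simp add: Hf_def del: code.simps, blast)
  next
    case n0: False
    show ?thesis
    proof (cases "pd1 n = 1")
      case True then show ?thesis using RC_is_code by (subst Fn_Hf) (simp add: Hf_def del: code.simps)
    next
      case n1: False
      show ?thesis
      proof (cases "pd1 n = 2")
        case True then obtain q where "Fn p0 (pd2 n) = code q" using r by auto
        then show ?thesis using True by (subst Fn_Hf) (auto simp: Hf_def intro: exI[of _ "Neg q"])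
      next
        case n2: False
        show ?thesis
        proof (cases "pd1 n = 3")
          case True
          obtain q1 where q1: "Fn p0 (pd1 (pd2 n)) = code q1" using a True by auto
          obtain q2 where q2: "Fn p0 (pd2 (pd2 n)) = code q2" using b True by auto
          show ?thesis using True n0 n1 n2 q1 q2 by (subst Fn_Hf) (auto simp: Hf_def intro: exI[of _ "Conj q1 q2"])
        next
          case n3: False
          show ?thesis
          proof (cases "pd1 n = 4")
            case True
            obtain q2 where q2: "Fn p0 (pd2 (pd2 n)) = code q2" using b True by auto
            show ?thesis using True n0 n1 n2 n3 q2
              by (subst Fn_Hf) (auto simp: Hf_def SetF_def intro: exI[of _ "Ex (2 * pd1 (pd2 n)) (Conj (SetF (2 * pd1 (pd2 n))) q2)"])
          next
            case False
            then show ?thesis using n0 n1 n2 n3 by (subst Fn_Hf) (auto simp: Hf_def intro: exI[of _ "Rel 7 []"])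
          qed
        qed
      qed
    qed
  qed
qed

lemma code_cases: "(\<exists>p. code p = n) \<or> (\<exists>q. Fn p0 n = code q \<and> \<not> wf_fm n2_sig q)"
proof (induction n rule: less_induct)
  case (less n)
  obtain t r where tr: "prod_decode n = (t, r)" "n = prod_encode (t, r)" by (rule pd_cases)
  obtain a b where ab: "prod_decode r = (a, b)" "r = prod_encode (a, b)" by (rule pd_cases)
  have rl: "t \<noteq> 0 \<Longrightarrow> r < n" using pd2_less[of n] tr by simp
  have al: "t \<noteq> 0 \<Longrightarrow> a < n" using lt1[of n] tr ab by simp
  have bl: "t \<noteq> 0 \<Longrightarrow> b < n" using lt2[of n] tr ab by simp
  have Fn: "Fn p0 n = Hf p0 (Fn p0) n" by (rule Fn_Hf)
  consider "t = 0" | "t = 1" | "t = 2" | "t = 3" | "t = 4" | "t > 4" by linarith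
  then show ?case
  proof cases
    case 1 then show ?thesis using tr ab by (intro disjI1 exI[of _ "Eq a b"]) simp
  next
    case 2 then show ?thesis using tr ab
      by (intro disjI1 exI[of _ "Rel a (list_decode b)"]) simp
  next
    case 3
    have "r < n" using rl 3 by simp
    from less.IH[OF this] show ?thesis
    proof (elim disjE exE conjE)
      fix p assume "code p = r" then show ?thesis using tr 3 by (intro disjI1 exI[of _ "Neg p"]) simp
    next
      fix q assume "Fn p0 r = code q" "\<not> wf_fm n2_sig q"
      then show ?thesis using tr 3 Fn by (intro disjI2 exI[of _ "Neg q"]) (simp add: Hf_def)
    qed
  next
    case 4
    obtain qa where qa: "Fn p0 a = code qa" using Fn_is_code by blast
    obtain qb where qb: "Fn p0 b = code qb" using Fn_is_code by blast
    have "a < n" "b < n" using al bl 4 by simp_all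
    from less.IH[OF this(1)] less.IH[OF this(2)] show ?thesis
    proof (elim disjE exE conjE)
      fix p1 p2 assume "code p1 = a" "code p2 = b"
      then show ?thesis using tr ab 4 by (intro disjI1 exI[of _ "Conj p1 p2"]) simp
    next
      fix p1 q assume "code p1 = a" "Fn p0 b = code q" "\<not> wf_fm n2_sig q"
      then show ?thesis using tr ab 4 Fn qa by (intro disjI2 exI[of _ "Conj qa q"]) (simp add: Hf_def)
    next
      fix q p2 assume "Fn p0 a = code q" "\<not> wf_fm n2_sig q" "code p2 = b"
      then show ?thesis using tr ab 4 Fn qb by (intro disjI2 exI[of _ "Conj q qb"]) (simp add: Hf_def)
    next
      fix q q' assume "Fn p0 a = code q" "\<not> wf_fm n2_sig q" "Fn p0 b = code q'"
      then show ?thesis using tr ab 4 Fn by (intro disjI2 exI[of _ "Conj q q'"]) (simp add: Hf_def)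
    qed
  next
    case 5
    have "b < n" using bl 5 by simp
    from less.IH[OF this] show ?thesis
    proof (elim disjE exE conjE)
      fix p assume "code p = b" then show ?thesis using tr ab 5 by (intro disjI1 exI[of _ "Ex a p"]) simp
    next
      fix q assume "Fn p0 b = code q" "\<not> wf_fm n2_sig q"
      then show ?thesis using tr ab 5 Fn
        by (intro disjI2 exI[of _ "Ex (2 * a) (Conj (SetF (2 * a)) q)"]) (simp add: Hf_def SetF_def)
    qed
  next
    case 6
    then show ?thesis using tr Fn by (intro disjI2 exI[of _ "Rel 7 []"]) (simp add: Hf_def n2_sig_def)
  qed
qed


lemma mem_codes: "code p \<in> {code q | q. P q} \<longleftrightarrow> P p"
proof
  assume "code p \<in> {code q | q. P q}"
  then obtain q where "code p = code q" "P q" by blast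
  then show "P p" using code_inj by metis
qed blast

context setting
begin

lemma sent_equiv:
  assumes "wf_fm lat_sig p" "fv p = {}"
  shows "(\<forall>e. range e \<subseteq> {U. openin X U} \<longrightarrow> sat {U. openin X U} lat_rel e p) \<longleftrightarrow>
         (\<forall>e'. range e' \<subseteq> (UNIV :: (nat + nat set) set) \<longrightarrow> S2 e' (T p0 p))"
proof -
  have eq: "sat {U. openin X U} lat_rel e p \<longleftrightarrow> S2 e' (T p0 p)" for e e'
    using assms by (intro sem_T) auto
  have o: "range (\<lambda>_::nat. {}) \<subseteq> {U. openin X U}" by auto
  show ?thesis
  proof
    assume h: "\<forall>e. range e \<subseteq> {U. openin X U} \<longrightarrow> sat {U. openin X U} lat_rel e p"
    show "\<forall>e'. range e' \<subseteq> (UNIV :: (nat + nat set) set) \<longrightarrow> S2 e' (T p0 p)"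
    proof (intro allI impI)
      fix e' :: "nat \<Rightarrow> nat + nat set"
      show "S2 e' (T p0 p)" using h[rule_format, OF o] eq[of "\<lambda>_. {}" e'] by simp
    qed
  next
    assume h: "\<forall>e'. range e' \<subseteq> (UNIV :: (nat + nat set) set) \<longrightarrow> S2 e' (T p0 p)"
    show "\<forall>e. range e \<subseteq> {U. openin X U} \<longrightarrow> sat {U. openin X U} lat_rel e p"
    proof (intro allI impI)
      fix e :: "nat \<Rightarrow> 'a set"
      show "sat {U. openin X U} lat_rel e p" using h eq[of e "\<lambda>_. Inl 0"] by simp
    qed
  qed
qed

lemma reduction: "n \<in> FO_open_lattice X \<longleftrightarrow> Fn p0 n \<in> FO_N2"
proof (cases "\<exists>p. code p = n")
  case True
  then obtain p where p: "code p = n" by blast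
  have lat: "n \<in> FO_open_lattice X \<longleftrightarrow> sentence lat_sig p \<and>
      (\<forall>e. range e \<subseteq> {U. openin X U} \<longrightarrow> sat {U. openin X U} lat_rel e p)"
    unfolding FO_open_lattice_def FO_theory_def p[symmetric] by (rule mem_codes)
  have F: "Fn p0 n = code (T p0 p)" using p Fn_code[of p0 p] by simp
  have n2: "Fn p0 n \<in> FO_N2 \<longleftrightarrow> sentence n2_sig (T p0 p) \<and>
      (\<forall>e'. range e' \<subseteq> (UNIV :: (nat + nat set) set) \<longrightarrow> S2 e' (T p0 p))"
    unfolding FO_N2_def FO_theory_def F by (rule mem_codes)
  show ?thesis
  proof (cases "wf_fm lat_sig p")
    case True
    have w: "wf_fm n2_sig (T p0 p) \<and> fv (T p0 p) = (\<lambda>v. 2 * v) ` fv p"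
      using wf_T[OF wf0 p0 True] .
    show ?thesis
    proof (cases "fv p = {}")
      case True2: True
      have "sentence lat_sig p" "sentence n2_sig (T p0 p)" using True True2 w unfolding sentence_def by auto
      then show ?thesis unfolding lat n2 using sent_equiv[OF True True2] by simp
    next
      case False
      then have "\<not> sentence lat_sig p" "\<not> sentence n2_sig (T p0 p)" using w unfolding sentence_def by auto
      then show ?thesis unfolding lat n2 by simp
    qed
  next
    case False
    then have "\<not> sentence lat_sig p" "\<not> sentence n2_sig (T p0 p)"
      using not_wf_T[OF False] unfolding sentence_def by auto
    then show ?thesis unfolding lat n2 by simp
  qed
next
  case False
  then have a: "n \<notin> FO_open_lattice X" unfolding FO_open_lattice_def FO_theory_def by blast
  obtain q where q: "Fn p0 n = code q" "\<not> wf_fm n2_sig q" using code_cases False by blast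
  have "\<not> sentence n2_sig q" using q(2) unfolding sentence_def by simp
  then have "Fn p0 n \<notin> FO_N2" unfolding FO_N2_def FO_theory_def q(1) mem_codes by simp
  then show ?thesis using a by simp
qed

end


theorem proposition3p1:
  fixes X :: "'a topology" and \<beta> \<kappa> :: "nat \<Rightarrow> 'a set"
  assumes "AnLCS X \<beta> \<kappa>"
  shows "FO_open_lattice X \<le>\<^sub>m FO_N2"
proof -
  have bo: "\<And>n. openin X (\<beta> n)" and base: "\<And>U. openin X U \<Longrightarrow> \<exists>I. U = \<Union> (\<beta> ` I)"
    and comp: "\<And>i. compactin X (\<kappa> i)" and cov: "\<And>n. \<exists>I. \<beta> n = \<Union> (\<kappa> ` I)"
    and an: "analytical {prod_encode (i, n) | i n. \<kappa> i \<subseteq> \<Union> (\<beta> ` set_decode n)}"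
    using assms unfolding AnLCS_def by auto
  obtain p0 where wf0: "wf_fm n2_sig p0" and fv0: "fv p0 \<subseteq> {0}"
    and mem: "\<And>n. n \<in> {prod_encode (i, n) | i n. \<kappa> i \<subseteq> \<Union> (\<beta> ` set_decode n)} \<longleftrightarrow> sat UNIV n2_rel (\<lambda>_. Inl n) p0"
    using an unfolding analytical_def by blast
  have Q: "S2 (\<lambda>_. Inl (prod_encode (i, k))) p0 \<longleftrightarrow> \<kappa> i \<subseteq> \<Union> (\<beta> ` set_decode k)" for i k
    using mem[of "prod_encode (i, k)"] by simp
  interpret setting X \<beta> \<kappa> p0
    by unfold_locales (use fv0 wf0 Q bo comp cov base in auto)
  show ?thesis unfolding many_one_reducible_def using computable_Fn reduction by blast
qed


end
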